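(* Let $(X,<)$ be a Banach lattice with lattice norm $\|\cdot\|$, and let $\mathcal{R}$ be the almost summability on $\mathcal{D}_{\mathcal{R}}\subset X^{\mathbb{N}}$. Then $\mathcal{R}$ preserves order-inequalities.
   Context: A sequence $(x_k)$ in $X$ is almost convergent to $L\in X$ if $\frac{1}{m+1}\sum_{i=0}^m x_{n+i}\to L$ in norm as $m\to\infty$, uniformly in $n$; the almost summability $\mathcal{R}$ has as domain $\mathcal{D}_{\mathcal{R}}$ the almost convergent sequences and assigns their almost limit; write $x_n\overset{\mathcal{R}}{\longrightarrow}L$. For $u\in X$, $|u|=u\vee(-u)$. $\mathcal{R}$ preserves order-inequalities if: whenever $(w_n),(x_n),(y_n),(z_n)\in\mathcal{D}_{\mathcal{R}}$, $w,x,y,z\in X$ and $C>0$ satisfy, for all $n$, $-C[(x_n-x)+(y_n-y)+(z_n-z)]<w_n-w<C[(x_n-x)+(y_n-y)+(z_n-z)]$ in the lattice order, and $x_n\overset{\mathcal{R}}{\longrightarrow}x$, $y_n\overset{\mathcal{R}}{\longrightarrow}y$, $z_n\overset{\mathcal{R}}{\longrightarrow}z$, then $w_n\overset{\mathcal{R}}{\longrightarrow}w$. *)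

theory Defs
  imports "HOL-Analysis.Analysis"
begin

text \<open>Banach lattice: a real Banach space which is a vector lattice (the order is
  translation invariant and invariant under multiplication by nonnegative scalars,
  and any two elements have a supremum and an infimum), whose norm is a lattice norm:
  \<open>|x| \<le> |y|\<close> implies \<open>norm x \<le> norm y\<close>, where \<open>|u| = u \<squnion> (-u)\<close>.\<close>

class banach_lattice = banach + ordered_real_vector + lattice +
  assumes lattice_norm: "sup x (- x) \<le> sup y (- y) \<Longrightarrow> norm x \<le> norm y"

definition almost_converges_to :: "(nat \<Rightarrow> 'a::real_normed_vector) \<Rightarrow> 'a \<Rightarrow> bool" where
  "almost_converges_to x L \<longleftrightarrow>
     (\<forall>e>0. \<exists>M. \<forall>m\<ge>M. \<forall>n. norm ((1 / (real m + 1)) *\<^sub>R (\<Sum>i\<le>m. x (n + i)) - L) < e)"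

definition almost_summability_domain :: "(nat \<Rightarrow> 'a::real_normed_vector) set" where
  "almost_summability_domain = {x. \<exists>L. almost_converges_to x L}"

definition almost_summability_preserves_order_inequalities :: "'a::banach_lattice itself \<Rightarrow> bool" where
  "almost_summability_preserves_order_inequalities _ \<longleftrightarrow>
     (\<forall>(ws::nat \<Rightarrow> 'a) xs ys zs w x y z C.
        ws \<in> almost_summability_domain \<and> xs \<in> almost_summability_domain \<and>
        ys \<in> almost_summability_domain \<and> zs \<in> almost_summability_domain \<and>
        C > 0 \<and>
        (\<forall>n. - (C *\<^sub>R ((xs n - x) + (ys n - y) + (zs n - z))) < ws n - w \<and>
             ws n - w < C *\<^sub>R ((xs n - x) + (ys n - y) + (zs n - z))) \<and>
        almost_converges_to xs x \<and> almost_converges_to ys y \<and> almost_converges_to zs z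
        \<longrightarrow> almost_converges_to ws w)"

end

theory Submission
  imports Defs
begin

lemma bl_norm_le:
  fixes a b :: "'a::banach_lattice"
  assumes "- a \<le> b" "b \<le> a"
  shows "norm b \<le> norm a"
proof (rule lattice_norm)
  have "- b \<le> a" using assms(1) by (simp add: minus_le_iff)
  then have "sup b (- b) \<le> a" using assms(2) by simp
  also have "a \<le> sup a (- a)" by simp
  finally show "sup b (- b) \<le> sup a (- a)" .
qed

lemma mean_sub:
  fixes f :: "nat \<Rightarrow> 'a::real_normed_vector"
  shows "(1 / (real m + 1)) *\<^sub>R (\<Sum>i\<le>m. f i - c) = (1 / (real m + 1)) *\<^sub>R (\<Sum>i\<le>m. f i) - c"
proof -
  have "(\<Sum>i\<le>m. f i - c) = (\<Sum>i\<le>m. f i) - (real m + 1) *\<^sub>R c"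
    by (simp add: sum_subtractf sum_constant_scaleR add.commute)
  moreover have "(1 / (real m + 1)) *\<^sub>R ((real m + 1) *\<^sub>R c) = c"
    by simp
  ultimately show ?thesis by (simp add: scaleR_diff_right)
qed

lemma sum_scale_mono:
  fixes f g :: "nat \<Rightarrow> 'a::ordered_real_vector"
  assumes "\<And>i. f i \<le> g i"
  shows "(1 / (real m + 1)) *\<^sub>R (\<Sum>i\<le>m. f i) \<le> (1 / (real m + 1)) *\<^sub>R (\<Sum>i\<le>m. g i)"
  by (rule scaleR_left_mono) (auto intro: sum_mono assms)

theorem theorem3p6:
  shows "almost_summability_preserves_order_inequalities TYPE('a::banach_lattice)"
  unfolding almost_summability_preserves_order_inequalities_def
proof (intro allI impI)
  fix ws xs ys zs :: "nat \<Rightarrow> 'a" and w x y z :: 'a and C :: real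
  assume H: "ws \<in> almost_summability_domain \<and> xs \<in> almost_summability_domain \<and>
        ys \<in> almost_summability_domain \<and> zs \<in> almost_summability_domain \<and>
        C > 0 \<and>
        (\<forall>n. - (C *\<^sub>R ((xs n - x) + (ys n - y) + (zs n - z))) < ws n - w \<and>
             ws n - w < C *\<^sub>R ((xs n - x) + (ys n - y) + (zs n - z))) \<and>
        almost_converges_to xs x \<and> almost_converges_to ys y \<and> almost_converges_to zs z"
  define S where "S n = (xs n - x) + (ys n - y) + (zs n - z)" for n
  have C: "C > 0" using H by blast
  have lo: "- (C *\<^sub>R S n) \<le> ws n - w" for n using H unfolding S_def by (auto intro: less_imp_le)
  have hi: "ws n - w \<le> C *\<^sub>R S n" for n using H unfolding S_def by (auto intro: less_imp_le)
  have cx: "almost_converges_to xs x" and cy: "almost_converges_to ys y"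
    and cz: "almost_converges_to zs z" using H by blast+
  show "almost_converges_to ws w"
    unfolding almost_converges_to_def
  proof (intro allI impI)
    fix e :: real assume e: "e > 0"
    define e' where "e' = e / (3 * C)"
    have e': "e' > 0" using e C by (simp add: e'_def)
    obtain M1 where M1: "\<forall>m\<ge>M1. \<forall>n. norm ((1 / (real m + 1)) *\<^sub>R (\<Sum>i\<le>m. xs (n + i)) - x) < e'"
      using cx e' unfolding almost_converges_to_def by blast
    obtain M2 where M2: "\<forall>m\<ge>M2. \<forall>n. norm ((1 / (real m + 1)) *\<^sub>R (\<Sum>i\<le>m. ys (n + i)) - y) < e'"
      using cy e' unfolding almost_converges_to_def by blast
    obtain M3 where M3: "\<forall>m\<ge>M3. \<forall>n. norm ((1 / (real m + 1)) *\<^sub>R (\<Sum>i\<le>m. zs (n + i)) - z) < e'"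
      using cz e' unfolding almost_converges_to_def by blast
    show "\<exists>M. \<forall>m\<ge>M. \<forall>n. norm ((1 / (real m + 1)) *\<^sub>R (\<Sum>i\<le>m. ws (n + i)) - w) < e"
    proof (intro exI allI impI)
      fix m n assume m: "max M1 (max M2 M3) \<le> m"
      define c where "c = 1 / (real m + 1)"
      define D where "D = c *\<^sub>R (\<Sum>i\<le>m. ws (n + i) - w)"
      define T where "T = c *\<^sub>R (\<Sum>i\<le>m. S (n + i))"
      have D: "D = c *\<^sub>R (\<Sum>i\<le>m. ws (n + i)) - w"
        unfolding D_def c_def by (rule mean_sub)
      have T: "T = (c *\<^sub>R (\<Sum>i\<le>m. xs (n + i)) - x) + (c *\<^sub>R (\<Sum>i\<le>m. ys (n + i)) - y)
          + (c *\<^sub>R (\<Sum>i\<le>m. zs (n + i)) - z)"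
        unfolding T_def S_def c_def
        by (simp add: sum.distrib scaleR_add_right mean_sub)
      have "c *\<^sub>R (\<Sum>i\<le>m. - (C *\<^sub>R S (n + i))) \<le> D"
        unfolding c_def D_def by (rule sum_scale_mono) (rule lo)
      moreover have "c *\<^sub>R (\<Sum>i\<le>m. - (C *\<^sub>R S (n + i))) = - (C *\<^sub>R T)"
        unfolding T_def by (simp add: sum_negf scaleR_sum_right[symmetric])
      ultimately have l: "- (C *\<^sub>R T) \<le> D" by simp
      have "D \<le> c *\<^sub>R (\<Sum>i\<le>m. C *\<^sub>R S (n + i))"
        unfolding c_def D_def by (rule sum_scale_mono) (rule hi)
      moreover have "c *\<^sub>R (\<Sum>i\<le>m. C *\<^sub>R S (n + i)) = C *\<^sub>R T"
        unfolding T_def by (simp add: scaleR_sum_right[symmetric])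
      ultimately have u: "D \<le> C *\<^sub>R T" by simp
      have "norm D \<le> norm (C *\<^sub>R T)" using bl_norm_le[OF l u] .
      also have "\<dots> = C * norm T" using C by simp
      also have "norm T < 3 * e'"
      proof -
        have "norm T \<le> norm (c *\<^sub>R (\<Sum>i\<le>m. xs (n + i)) - x) + norm (c *\<^sub>R (\<Sum>i\<le>m. ys (n + i)) - y)
          + norm (c *\<^sub>R (\<Sum>i\<le>m. zs (n + i)) - z)"
          unfolding T by (meson add_mono norm_triangle_ineq order_trans order_refl)
        moreover have "norm (c *\<^sub>R (\<Sum>i\<le>m. xs (n + i)) - x) < e'" using M1 m unfolding c_def by auto
        moreover have "norm (c *\<^sub>R (\<Sum>i\<le>m. ys (n + i)) - y) < e'" using M2 m unfolding c_def by auto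
        moreover have "norm (c *\<^sub>R (\<Sum>i\<le>m. zs (n + i)) - z) < e'" using M3 m unfolding c_def by auto
        ultimately show ?thesis by linarith
      qed
      then have "C * norm T < C * (3 * e')" using C by simp
      also have "C * (3 * e') = e" using C by (simp add: e'_def)
      finally show "norm ((1 / (real m + 1)) *\<^sub>R (\<Sum>i\<le>m. ws (n + i)) - w) < e"
        using D unfolding c_def by simp
    qed
  qed
qed

end
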